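(* Let $\Lambda=(\lambda_{pk})_{1\le p\le P,\,k\ge1}$ have independent entries $\lambda_{pk}\sim\mathrm{GDP}(\alpha_k,\eta_k)$, and suppose one of the following holds for all $k\ge1$: (I) $\alpha_k=\delta^k$, $\eta_k=\rho$ with $\delta>2$, $\rho>0$; (II) $\alpha_k=\delta$, $\eta_k=\rho^k$ with $\delta>2$, $0<\rho<1$; (III) $\alpha_k=\delta^k$, $\eta_k=\rho^k$ with $\delta>2$, $0<\rho<\delta$. Then $\mathbb P\{\max_{1\le p\le P}\sum_{k\ge1}\lambda_{pk}^2<\infty\}=1$. Moreover, let $\Sigma$ be any fixed $P\times P$ diagonal matrix, $\Omega=\Lambda\Lambda^T+\Sigma$, and for $K\ge1$ let $\Lambda^K$ be the $P\times K$ matrix of the first $K$ columns of $\Lambda$ and $\Omega^K=\Lambda^K(\Lambda^K)^T+\Sigma$. Given $\epsilon>0$ there exists $K_0=K_0(P,\rho,\delta,\epsilon)$ such that for all $K\ge K_0$, $\mathbb P\{d_\infty(\Omega,\Omega^K)<\epsilon\}>1-\epsilon$, where $d_\infty(A,B)=\max_{1\le i,j\le P}|a_{ij}-b_{ij}|$. One may take $K_0=O\!\left(\frac{\log(P/\epsilon^2)}{\log\delta}\right)$ under (I), $K_0=O\!\left(\frac{\log(P/\epsilon^2)}{\log(1/\rho)}\right)$ under (II), and $K_0=O\!\left(\frac{\log(P/\epsilon^2)}{\log(\delta/\rho)}\right)$ under (III).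
   Context: $\mathrm{GDP}(\alpha,\eta)$ with $\alpha,\eta>0$ denotes the generalized double Pareto distribution with density $\frac{\alpha}{2\eta}\left(1+\frac{|x|}{\eta}\right)^{-(\alpha+1)}$ on $\mathbb R$. *)

theory Defs
  imports "HOL-Probability.Probability"
begin

definition gdp_density :: "real \<Rightarrow> real \<Rightarrow> real \<Rightarrow> real" where
  "gdp_density a e x = a / (2 * e) * (1 + \<bar>x\<bar> / e) powr (- (a + 1))"

definition gdp_loadings ::
  "'a measure \<Rightarrow> nat \<Rightarrow> (nat \<Rightarrow> real) \<Rightarrow> (nat \<Rightarrow> real) \<Rightarrow> (nat \<Rightarrow> nat \<Rightarrow> 'a \<Rightarrow> real) \<Rightarrow> bool" where
  "gdp_loadings M P al et Lam \<longleftrightarrow>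
     prob_space M \<and>
     prob_space.indep_vars M (\<lambda>_. borel) (\<lambda>(p, k). Lam p k) ({1..P} \<times> {1..}) \<and>
     (\<forall>p\<in>{1..P}. \<forall>k\<ge>1. distributed M lborel (Lam p k)
         (\<lambda>x. ennreal (gdp_density (al k) (et k) x)))"

text \<open>Entry (i,j) of Omega = Lambda Lambda^T + Sigma (columns indexed from 1).\<close>
definition Omega_full :: "(nat \<Rightarrow> nat \<Rightarrow> 'a \<Rightarrow> real) \<Rightarrow> (nat \<Rightarrow> nat \<Rightarrow> real) \<Rightarrow> 'a \<Rightarrow> nat \<Rightarrow> nat \<Rightarrow> real" where
  "Omega_full Lam Sig w i j = (\<Sum>k. Lam i (Suc k) w * Lam j (Suc k) w) + Sig i j"

definition Omega_trunc :: "(nat \<Rightarrow> nat \<Rightarrow> 'a \<Rightarrow> real) \<Rightarrow> (nat \<Rightarrow> nat \<Rightarrow> real) \<Rightarrow> nat \<Rightarrow> 'a \<Rightarrow> nat \<Rightarrow> nat \<Rightarrow> real" where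
  "Omega_trunc Lam Sig K w i j = (\<Sum>k\<in>{1..K}. Lam i k w * Lam j k w) + Sig i j"

definition d_inf :: "nat \<Rightarrow> (nat \<Rightarrow> nat \<Rightarrow> real) \<Rightarrow> (nat \<Rightarrow> nat \<Rightarrow> real) \<Rightarrow> real" where
  "d_inf P A B = Max {\<bar>A i j - B i j\<bar> | i j. i \<in> {1..P} \<and> j \<in> {1..P}}"

end

theory Submission
  imports Defs
begin


lemma S: fixes c :: real assumes "c > 0" shows "-1/c + 2/(c+1) - 1/(c+2) = -2/(c*(c+1)*(c+2))"
proof -
  have p: "c+1 \<noteq> 0" "c+2 \<noteq> 0" "c \<noteq> 0" "c*(c+1)*(c+2) \<noteq> 0" using assms by auto
  have 1: "(-1/c) * (c*(c+1)*(c+2)) = -((c+1)*(c+2))" using p by simp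
  have 2: "(2/(c+1)) * (c*(c+1)*(c+2)) = 2*c*(c+2)" using p by simp
  have 3: "(1/(c+2)) * (c*(c+1)*(c+2)) = c*(c+1)" using p by simp
  have "(-1/c + 2/(c+1) - 1/(c+2)) * (c*(c+1)*(c+2)) = -2"
    unfolding distrib_right left_diff_distrib 1 2 3 by (simp add: algebra_simps)
  moreover have "\<And>S X::real. X \<noteq> 0 \<Longrightarrow> S * X = -2 \<Longrightarrow> S = -2/X"
  proof -
    fix S X :: real assume "X \<noteq> 0" "S * X = -2"
    have "S = (S*X)/X" using \<open>X \<noteq> 0\<close> by simp
    then show "S = -2/X" using \<open>S * X = -2\<close> by metis
  qed
  ultimately show ?thesis using p(4) by blast
qed
lemma h: fixes a e :: real assumes "a > 2" shows "0 - a*e^2/2 * (1/(2-a) - 2/(1-a) - 1/a) = e^2/((a-1)*(a-2))"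
proof -
  define c where "c = a - 2"
  have c: "c > 0" "a = c+2" using assms by (auto simp: c_def)
  have "1/(2-a) - 2/(1-a) - 1/a = -1/c + 2/(c+1) - 1/(c+2)" unfolding c(2)
  proof -
    have q: "1-(c+2) = -(c+1)" "2-(c+2) = -c" by simp_all
    have a1: "2/(1-(c+2)) = -(2/(c+1))" unfolding q by (rule divide_minus_right)
    have a2: "1/(2-(c+2)) = -(1/c)" unfolding q by (rule divide_minus_right)
    show "1/(2-(c+2)) - 2/(1-(c+2)) - 1/(c+2) = -1/c + 2/(c+1) - 1/(c+2)" unfolding a1 a2 by simp
  qed
  also have "... = -2/(c*(c+1)*(c+2))" by (rule S[OF c(1)])
  finally have e: "1/(2-a) - 2/(1-a) - 1/a = -2/(c*(c+1)*(c+2))" .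
  have "(c+2)*e^2/2 * (2/(c*(c+1)*(c+2))) = e^2/(c*(c+1))" using c by simp
  then show ?thesis unfolding e unfolding c(2) by (simp add: algebra_simps)
qed

lemma F_deriv:
  fixes a e x :: real assumes "a > 2" "e > 0" "x \<ge> 0"
  shows "((\<lambda>x. a * e^2 / 2 * ((1 + x/e) powr (2-a) / (2-a) - 2 * (1 + x/e) powr (1-a) / (1-a)
           - (1 + x/e) powr (-a) / a)) has_real_derivative gdp_density a e x * x^2) (at x)"
proof -
  define u where "u = 1 + x/e"
  have u: "u > 0" using assms by (simp add: u_def add_pos_nonneg)
  define w where "w = u powr (-(a+1))"
  have p1: "u powr (2-a-1) = u^2 * w"
  proof -
    have "u powr (2-a-1) = u powr (2 + (-(a+1)))" by (simp add: algebra_simps)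
    also have "\<dots> = u powr 2 * w" unfolding w_def by (rule powr_add)
    also have "u powr 2 = u^2" using u by (simp add: powr_numeral)
    finally show ?thesis .
  qed
  have p2: "u powr (1-a-1) = u * w"
  proof -
    have "u powr (1-a-1) = u powr (1 + (-(a+1)))" by (simp add: algebra_simps)
    also have "\<dots> = u powr 1 * w" unfolding w_def by (rule powr_add)
    also have "u powr 1 = u" using u by simp
    finally show ?thesis .
  qed
  have p3: "u powr (-a-1) = w" unfolding w_def by (rule arg_cong[of _ _ "(powr) u"]) simp
  have x: "x = e * (u - 1)" using assms by (simp add: u_def field_simps)
  have eq: "a * e^2 / 2 * ((2-a) * u powr (2-a-1) * (1/e) / (2-a) - 2 * ((1-a) * u powr (1-a-1) * (1/e)) / (1-a)
       - (-a) * u powr (-a-1) * (1/e) / a) = gdp_density a e x * x^2"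
  proof -
    have g: "gdp_density a e x = a/(2*e) * w"
      unfolding gdp_density_def w_def u_def using assms by (simp add: abs_of_nonneg)
    have c1: "(2-a) * (u^2*w) * (1/e) / (2-a) = u^2*w/e" using assms by simp
    have c2: "2 * ((1-a) * (u*w) * (1/e)) / (1-a) = 2*u*w/e" using assms by simp
    have c3: "(-a) * w * (1/e) / a = - (w/e)" using assms by simp
    show ?thesis unfolding p1 p2 p3 g c1 c2 c3 unfolding x using assms
      by (simp add: field_simps power2_eq_square)
  qed
  have g1: "DERIV (\<lambda>x. 1 + x/e) x :> 1/e" using assms by (auto intro!: derivative_eq_intros)
  have pw: "DERIV (\<lambda>x. (1 + x/e) powr s) x :> s * u powr (s - 1) * (1/e)" for s
    unfolding u_def using DERIV_fun_powr[OF g1, of s] u by (simp add: u_def)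
  have "((\<lambda>x. a * e^2 / 2 * ((1 + x/e) powr (2-a) / (2-a) - 2 * (1 + x/e) powr (1-a) / (1-a)
           - (1 + x/e) powr (-a) / a)) has_real_derivative 
     a * e^2 / 2 * ((2-a) * u powr (2-a-1) * (1/e) / (2-a) - 2 * ((1-a) * u powr (1-a-1) * (1/e)) / (1-a)
       - (-a) * u powr (-a-1) * (1/e) / a)) (at x)"
    by (intro DERIV_cmult DERIV_diff DERIV_cdivide pw)
  then show ?thesis using eq by simp
qed

lemma F_lim:
  fixes a e :: real assumes "a > 2" "e > 0"
  shows "((\<lambda>x. a * e^2 / 2 * ((1 + x/e) powr (2-a) / (2-a) - 2 * (1 + x/e) powr (1-a) / (1-a)
           - (1 + x/e) powr (-a) / a)) \<longlongrightarrow> 0) at_top"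
proof -
  have "LIM x at_top. x * (1/e) :> at_top"
    by (rule filterlim_at_top_mult_tendsto_pos[OF tendsto_const]) (use assms in \<open>auto simp: filterlim_ident\<close>)
  then have "LIM x at_top. x / e :> at_top" by simp
  then have lim: "LIM x at_top. 1 + x / e :> at_top"
    by (rule filterlim_tendsto_add_at_top[OF tendsto_const])
  have t1: "((\<lambda>x. (1+x/e) powr (2-a)) \<longlongrightarrow> 0) at_top" by (rule tendsto_neg_powr[OF _ lim]) (use assms in simp)
  have t2: "((\<lambda>x. (1+x/e) powr (1-a)) \<longlongrightarrow> 0) at_top" by (rule tendsto_neg_powr[OF _ lim]) (use assms in simp)
  have t3: "((\<lambda>x. (1+x/e) powr (-a)) \<longlongrightarrow> 0) at_top" by (rule tendsto_neg_powr[OF _ lim]) (use assms in simp)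
  have "((\<lambda>x. a * e^2 / 2 * ((1 + x/e) powr (2-a) / (2-a) - 2 * (1 + x/e) powr (1-a) / (1-a)
           - (1 + x/e) powr (-a) / a)) \<longlongrightarrow> a * e^2 / 2 * (0 / (2-a) - 2 * 0 / (1-a) - 0 / a)) at_top"
    by (intro tendsto_intros t1 t2 t3) (use assms in auto)
  then show ?thesis by simp
qed

lemma gdp_meas[measurable]: "(\<lambda>x. gdp_density a e x) \<in> borel_measurable borel"
  unfolding gdp_density_def by measurable

lemma gdp_nonneg: "a \<ge> 0 \<Longrightarrow> e > 0 \<Longrightarrow> gdp_density a e x \<ge> 0"
  unfolding gdp_density_def by simp

lemma half_moment:
  fixes a e :: real assumes "a > 2" "e > 0"
  shows "(\<integral>\<^sup>+x. ennreal (gdp_density a e x * x^2) * indicator {0..} x \<partial>lborel) = ennreal (e^2/((a-1)*(a-2)))"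
proof -
  have "(\<integral>\<^sup>+x. ennreal (gdp_density a e x * x^2) * indicator {0..} x \<partial>lborel) =
     0 - (a * e^2 / 2 * ((1 + 0/e) powr (2-a) / (2-a) - 2 * (1 + 0/e) powr (1-a) / (1-a)
           - (1 + 0/e) powr (-a) / a))"
    by (rule nn_integral_FTC_atLeast[OF _ F_deriv[OF assms] _ F_lim[OF assms]])
       (use assms in \<open>auto intro!: mult_nonneg_nonneg gdp_nonneg\<close>)
  also have "(0::real) - (a * e^2 / 2 * ((1 + 0/e) powr (2-a) / (2-a) - 2 * (1 + 0/e) powr (1-a) / (1-a)
           - (1 + 0/e) powr (-a) / a)) = e^2/((a-1)*(a-2))"
    using h[OF assms(1), of e] by simp
  finally show ?thesis .
qed

lemma moment:
  fixes a e :: real assumes "a > 2" "e > 0"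
  shows "(\<integral>\<^sup>+x. ennreal (gdp_density a e x) * ennreal (x^2) \<partial>lborel) \<le> ennreal (2*e^2/((a-1)*(a-2)))"
proof -
  let ?g = "\<lambda>x. ennreal (gdp_density a e x * x^2) * indicator {0..} x"
  have ev: "gdp_density a e (-x) = gdp_density a e x" for x unfolding gdp_density_def by simp
  have "(\<integral>\<^sup>+x. ennreal (gdp_density a e x) * ennreal (x^2) \<partial>lborel) \<le> (\<integral>\<^sup>+x. ?g x + ?g (-x) \<partial>lborel)"
  proof (rule nn_integral_mono)
    fix x :: real
    show "ennreal (gdp_density a e x) * ennreal (x^2) \<le> ?g x + ?g (-x)"
      using assms by (cases "x \<ge> 0") (auto simp: ev ennreal_mult[symmetric] gdp_nonneg indicator_def)
  qed
  also have "... = (\<integral>\<^sup>+x. ?g x \<partial>lborel) + (\<integral>\<^sup>+x. ?g (-x) \<partial>lborel)"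
    by (rule nn_integral_add) auto
  also have "(\<integral>\<^sup>+x. ?g (-x) \<partial>lborel) = (\<integral>\<^sup>+x. ?g x \<partial>lborel)"
    using nn_integral_real_affine[of ?g "-1" 0] by simp
  also have "(\<integral>\<^sup>+x. ?g x \<partial>lborel) = ennreal (e^2/((a-1)*(a-2)))" by (rule half_moment[OF assms])
  also have "ennreal (e^2/((a-1)*(a-2))) + ennreal (e^2/((a-1)*(a-2))) = ennreal (2*e^2/((a-1)*(a-2)))"
    using assms by (subst ennreal_plus[symmetric]) (auto intro!: divide_nonneg_pos)
  finally show ?thesis .
qed


lemma tail_int:
  fixes X :: "nat \<Rightarrow> 'a \<Rightarrow> real"
  assumes X: "\<And>k. k \<ge> 1 \<Longrightarrow> X k \<in> borel_measurable M"
    and mom: "\<And>k. k \<ge> 1 \<Longrightarrow> (\<integral>\<^sup>+w. ennreal ((X k w)^2) \<partial>M) \<le> ennreal (A * q^k)"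
    and q: "0 < q" "q < 1" and A: "A \<ge> 0"
  shows "(\<integral>\<^sup>+w. (\<Sum>k. ennreal ((X (k+K+1) w)^2)) \<partial>M) \<le> ennreal (A * q^(K+1) / (1-q))"
proof -
  have "(\<integral>\<^sup>+w. (\<Sum>k. ennreal ((X (k+K+1) w)^2)) \<partial>M) = (\<Sum>k. \<integral>\<^sup>+w. ennreal ((X (k+K+1) w)^2) \<partial>M)"
    by (rule nn_integral_suminf) (use X in auto)
  also have "\<dots> \<le> (\<Sum>k. ennreal (A * q^(K+1) * q^k))"
  proof (rule suminf_le)
    fix k show "(\<integral>\<^sup>+w. ennreal ((X (k+K+1) w)^2) \<partial>M) \<le> ennreal (A * q^(K+1) * q^k)"
      using mom[of "k+K+1"] by (simp add: power_add mult_ac)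
  qed auto
  also have "(\<lambda>k. A * q^(K+1) * q^k) sums (A * q^(K+1) * (1 / (1-q)))"
    by (rule sums_mult) (rule geometric_sums, use q in auto)
  then have "(\<Sum>k. ennreal (A * q^(K+1) * q^k)) = ennreal (A * q^(K+1) * (1 / (1-q)))"
    using q A by (subst suminf_ennreal2) (auto simp: sums_iff)
  finally show ?thesis by simp
qed

lemma markov_e:
  assumes "prob_space M" "T \<in> borel_measurable M" "e > 0" "(\<integral>\<^sup>+w. T w \<partial>M) \<le> ennreal V" "V \<ge> 0"
  shows "measure M {w \<in> space M. ennreal e \<le> T w} \<le> V / e"
proof -
  interpret prob_space M by fact
  let ?S = "{w \<in> space M. ennreal e \<le> T w}"
  have S: "?S \<in> sets M" using assms(2) by measurable
  have "ennreal e * emeasure M ?S = (\<integral>\<^sup>+w. ennreal e * indicator ?S w \<partial>M)"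
    using S by (simp add: nn_integral_cmult_indicator)
  also have "\<dots> \<le> (\<integral>\<^sup>+w. T w \<partial>M)"
    by (rule nn_integral_mono) (auto simp: indicator_def)
  also have "\<dots> \<le> ennreal V" by fact
  finally have "ennreal (e * measure M ?S) \<le> ennreal V"
    using assms(3) by (simp add: emeasure_eq_measure ennreal_mult)
  then have "e * measure M ?S \<le> V" using assms(5) by (simp add: ennreal_le_iff)
  then show ?thesis using assms(3) by (simp add: field_simps)
qed

lemma ennreal_sum_lt:
  fixes x :: "nat \<Rightarrow> real"
  assumes "(\<Sum>k. ennreal ((x k)^2)) < ennreal e"
  shows "summable (\<lambda>k. (x k)^2) \<and> (\<Sum>k. (x k)^2) < e"
proof -
  have s: "summable (\<lambda>k. (x k)^2)" using assms by (intro summable_suminf_not_top) auto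
  then have "(\<Sum>k. ennreal ((x k)^2)) = ennreal (\<Sum>k. (x k)^2)" by (intro suminf_ennreal2) auto
  moreover have "0 \<le> (\<Sum>k. (x k)^2)" using s by (intro suminf_nonneg) auto
  ultimately show ?thesis using assms s by (auto simp: ennreal_less_iff)
qed

lemma entry_bound:
  fixes a b :: "nat \<Rightarrow> real"
  assumes sa: "summable (\<lambda>k. (a (k+K))^2)" and sb: "summable (\<lambda>k. (b (k+K))^2)"
    and ta: "(\<Sum>k. (a (k+K))^2) < e" and tb: "(\<Sum>k. (b (k+K))^2) < e"
  shows "summable (\<lambda>k. a k * b k) \<and> \<bar>(\<Sum>k. a k * b k) - (\<Sum>k<K. a k * b k)\<bar> < e"
proof -
  have ineq: "\<bar>x * y\<bar> \<le> (x^2 + y^2)/2" for x y :: real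
  proof -
    have "0 \<le> (\<bar>x\<bar> - \<bar>y\<bar>)^2" by simp
    then show ?thesis by (simp add: power2_eq_square abs_mult algebra_simps)
  qed
  have s2: "summable (\<lambda>k. ((a (k+K))^2 + (b (k+K))^2)/2)"
    using sa sb by (intro summable_divide summable_add)
  have sab: "summable (\<lambda>k. \<bar>a (k+K) * b (k+K)\<bar>)"
    by (rule summable_comparison_test[OF _ s2]) (use ineq in auto)
  then have sab': "summable (\<lambda>k. a (k+K) * b (k+K))" by (rule summable_rabs_cancel)
  then have sfull: "summable (\<lambda>k. a k * b k)" using summable_iff_shift[of "\<lambda>k. a k * b k" K] by simp
  have "(\<Sum>k. a k * b k) - (\<Sum>k<K. a k * b k) = (\<Sum>k. a (k+K) * b (k+K))"
    using suminf_split_initial_segment[OF sfull, of K] by simp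
  also have "\<bar>\<dots>\<bar> \<le> (\<Sum>k. \<bar>a (k+K) * b (k+K)\<bar>)" by (rule summable_rabs[OF sab])
  also have "\<dots> \<le> (\<Sum>k. ((a (k+K))^2 + (b (k+K))^2)/2)"
    by (rule suminf_le[OF _ sab s2]) (use ineq in auto)
  also have "\<dots> = ((\<Sum>k. (a (k+K))^2) + (\<Sum>k. (b (k+K))^2))/2"
    using suminf_divide[OF summable_add[OF sa sb], of 2] suminf_add[OF sa sb] by simp
  also have "\<dots> < e" using ta tb by simp
  finally show ?thesis using sfull by simp
qed

lemma dinf_less:
  assumes "P \<ge> 1"
  shows "d_inf P A B < e \<longleftrightarrow> (\<forall>i\<in>{1..P}. \<forall>j\<in>{1..P}. \<bar>A i j - B i j\<bar> < e)"
proof -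
  have eq: "{\<bar>A i j - B i j\<bar> | i j. i \<in> {1..P} \<and> j \<in> {1..P}} = (\<lambda>(i,j). \<bar>A i j - B i j\<bar>) ` ({1..P} \<times> {1..P})"
    by (auto simp: image_iff) blast
  have ne: "{1..P} \<times> {1..P} \<noteq> {}" using assms by auto
  show ?thesis unfolding d_inf_def eq
    by (subst Max_less_iff) (use ne in auto)
qed

lemma core2:
  fixes Lam :: "nat \<Rightarrow> nat \<Rightarrow> 'a \<Rightarrow> real"
  assumes ps: "prob_space M" and P: "P \<ge> 1"
    and meas: "\<And>p k. p \<in> {1..P} \<Longrightarrow> k \<ge> 1 \<Longrightarrow> Lam p k \<in> borel_measurable M"
    and mom: "\<And>p k. p \<in> {1..P} \<Longrightarrow> k \<ge> 1 \<Longrightarrow> (\<integral>\<^sup>+w. ennreal ((Lam p k w)^2) \<partial>M) \<le> ennreal (A * q^k)"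
    and q: "0 < q" "q < 1" and A: "A \<ge> 0" and e: "e > 0"
    and small: "real P * ((A * q^(K+1) / (1-q)) / e) < e"
  shows "measure M {w \<in> space M. d_inf P (Omega_full Lam Sig w) (Omega_trunc Lam Sig K w) < e} > 1 - e"
proof -
  interpret prob_space M by fact
  define V where "V = A * q^(K+1) / (1-q)"
  have V: "V \<ge> 0" using q A by (simp add: V_def)
  define T where "T p w = (\<Sum>k. ennreal ((Lam p (k+K+1) w)^2))" for p w
  have Tm: "T p \<in> borel_measurable M" if "p \<in> {1..P}" for p
    unfolding T_def using meas[OF that] by measurable
  define Bad where "Bad p = {w \<in> space M. ennreal e \<le> T p w}" for p
  have Badm: "Bad p \<in> sets M" if "p \<in> {1..P}" for p
    unfolding Bad_def using Tm[OF that] by measurable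
  have Badp: "measure M (Bad p) \<le> V / e" if p: "p \<in> {1..P}" for p
    unfolding Bad_def
  proof (rule markov_e[OF ps Tm[OF p] e _ V])
    show "integral\<^sup>N M (T p) \<le> ennreal V" unfolding T_def V_def
      by (rule tail_int[OF meas[OF p] mom[OF p] q A])
  qed
  define E where "E = {w \<in> space M. d_inf P (Omega_full Lam Sig w) (Omega_trunc Lam Sig K w) < e}"
  have Eeq: "E = {w \<in> space M. \<forall>i\<in>{1..P}. \<forall>j\<in>{1..P}. \<bar>Omega_full Lam Sig w i j - Omega_trunc Lam Sig K w i j\<bar> < e}"
    unfolding E_def using dinf_less[OF P] by auto
  have Em: "E \<in> sets M"
  proof -
    have [measurable]: "(\<lambda>w. Omega_full Lam Sig w i j - Omega_trunc Lam Sig K w i j) \<in> borel_measurable M"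
      if "i \<in> {1..P}" "j \<in> {1..P}" for i j
      unfolding Omega_full_def Omega_trunc_def using meas that by measurable
    show ?thesis unfolding Eeq by measurable
  qed
  have sub: "space M - (\<Union>p\<in>{1..P}. Bad p) \<subseteq> E"
  proof
    fix w assume w: "w \<in> space M - (\<Union>p\<in>{1..P}. Bad p)"
    have tl: "summable (\<lambda>k. (Lam p (Suc (k+K)) w)^2) \<and> (\<Sum>k. (Lam p (Suc (k+K)) w)^2) < e"
      if "p \<in> {1..P}" for p
    proof -
      have "T p w < ennreal e" using w that by (auto simp: Bad_def not_le)
      then show ?thesis unfolding T_def using ennreal_sum_lt[of "\<lambda>k. Lam p (k+K+1) w" e] by simp
    qed
    show "w \<in> E" unfolding Eeq
    proof (safe)
      show "w \<in> space M" using w by simp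
      fix i j assume i: "i \<in> {1..P}" and j: "j \<in> {1..P}"
      have "summable (\<lambda>k. Lam i (Suc k) w * Lam j (Suc k) w) \<and>
        \<bar>(\<Sum>k. Lam i (Suc k) w * Lam j (Suc k) w) - (\<Sum>k<K. Lam i (Suc k) w * Lam j (Suc k) w)\<bar> < e"
        by (rule entry_bound) (use tl[OF i] tl[OF j] in auto)
      moreover have "(\<Sum>k\<in>{1..K}. Lam i k w * Lam j k w) = (\<Sum>k<K. Lam i (Suc k) w * Lam j (Suc k) w)"
        using sum.atLeast1_atMost_eq[of "\<lambda>k. Lam i k w * Lam j k w" K] by simp
      ultimately show "\<bar>Omega_full Lam Sig w i j - Omega_trunc Lam Sig K w i j\<bar> < e"
        unfolding Omega_full_def Omega_trunc_def by simp
    qed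
  qed
  have Um: "(\<Union>p\<in>{1..P}. Bad p) \<in> sets M" using Badm by auto
  have "measure M (\<Union>p\<in>{1..P}. Bad p) \<le> (\<Sum>p\<in>{1..P}. measure M (Bad p))"
    by (rule measure_UNION_le) (use Badm in auto)
  also have "\<dots> \<le> (\<Sum>p\<in>{1..P}. V / e)" by (rule sum_mono) (use Badp in auto)
  also have "\<dots> = real P * (V / e)" by simp
  finally have U: "measure M (\<Union>p\<in>{1..P}. Bad p) < e" using small unfolding V_def by simp
  have "1 - e < 1 - measure M (\<Union>p\<in>{1..P}. Bad p)" using U by simp
  also have "\<dots> = measure M (space M - (\<Union>p\<in>{1..P}. Bad p))" using prob_compl[OF Um] by simp
  also have "\<dots> \<le> measure M E" by (rule finite_measure_mono[OF sub Em])
  finally show ?thesis unfolding E_def .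
qed



lemma vbound:
  fixes a d h :: real assumes "d > 2" "a \<ge> d" "h > 0"
  shows "2*h^2/((a-1)*(a-2)) \<le> 4*d/(d-2) * (h/a)^2"
proof -
  have a: "a > 2" using assms by simp
  have 1: "a - 2 \<ge> a*(d-2)/d" using assms by (simp add: field_simps)
  have 2: "a - 1 \<ge> a/2" using a by simp
  have pos: "a*(d-2)/d > 0" "a/2 > 0" using assms by auto
  have "(a/2) * (a*(d-2)/d) \<le> (a-1)*(a-2)"
    using mult_mono[OF 2 1] pos a by simp
  then have "2*h^2/((a-1)*(a-2)) \<le> 2*h^2/((a/2) * (a*(d-2)/d))"
    using pos assms by (intro divide_left_mono) (auto intro!: mult_pos_pos)
  also have "\<dots> = 4*d/(d-2) * (h/a)^2" using assms a by (simp add: field_simps power2_eq_square)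
  finally show ?thesis .
qed

lemma cases_facts:
  fixes \<delta> \<rho> r :: real and al et :: "nat \<Rightarrow> real"
  assumes cases:
    "(\<delta> > 2 \<and> \<rho> > 0 \<and> (\<forall>k\<ge>1. al k = \<delta> ^ k \<and> et k = \<rho>) \<and> r = \<delta>) \<or>
     (\<delta> > 2 \<and> 0 < \<rho> \<and> \<rho> < 1 \<and> (\<forall>k\<ge>1. al k = \<delta> \<and> et k = \<rho> ^ k) \<and> r = 1 / \<rho>) \<or>
     (\<delta> > 2 \<and> 0 < \<rho> \<and> \<rho> < \<delta> \<and> (\<forall>k\<ge>1. al k = \<delta> ^ k \<and> et k = \<rho> ^ k) \<and> r = \<delta> / \<rho>)"
  shows "\<exists>B>0. r > 1 \<and> \<delta> > 2 \<and> (\<forall>k\<ge>1. al k \<ge> \<delta> \<and> et k > 0 \<and> (et k / al k)^2 = B * (1/r^2)^k)"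
proof -
  have dk: "\<delta>^k \<ge> \<delta>" if "k \<ge> 1" "\<delta> > 2" for k
    using that by (simp add: self_le_power)
  from cases show ?thesis
  proof (elim disjE conjE)
    assume h: "\<delta> > 2" "\<rho> > 0" "\<forall>k\<ge>1. al k = \<delta> ^ k \<and> et k = \<rho>" "r = \<delta>"
    show ?thesis
      by (rule exI[of _ "\<rho>^2"]) (use h dk in \<open>auto simp: power_divide power_mult_distrib power_one_over power_mult[symmetric] mult.commute[of 2]\<close>)
  next
    assume h: "\<delta> > 2" "0 < \<rho>" "\<rho> < 1" "\<forall>k\<ge>1. al k = \<delta> \<and> et k = \<rho> ^ k" "r = 1 / \<rho>"
    show ?thesis
      by (rule exI[of _ "1/\<delta>^2"]) (use h in \<open>auto simp: power_divide power_mult_distrib power_one_over power_mult[symmetric] mult.commute[of 2]\<close>)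
  next
    assume h: "\<delta> > 2" "0 < \<rho>" "\<rho> < \<delta>" "\<forall>k\<ge>1. al k = \<delta> ^ k \<and> et k = \<rho> ^ k" "r = \<delta> / \<rho>"
    show ?thesis
      by (rule exI[of _ 1]) (use h dk in \<open>auto simp: power_divide power_mult_distrib power_one_over power_mult[symmetric] mult.commute[of 2]\<close>)
  qed
qed

lemma K0_bound:
  fixes lr L cc :: real assumes "lr > 0" "L \<ge> 0" "cc \<ge> 0"
  shows "(L+cc+1)/(2*lr) + 1 \<le> (cc+1+lr)*(1+L)/lr"
proof -
  have "(L+cc+1)/2 + lr \<le> (cc+1+lr)*(1+L)"
  proof -
    have e: "(cc+1+lr)*(1+L) = (cc+1) + L*cc + L + lr + lr*L" by (simp add: algebra_simps)
    have "L*cc \<ge> 0" "lr*L \<ge> 0" using assms by auto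
    moreover have "(L+cc+1)/2 \<le> L+cc+1" using assms by simp
    ultimately have "(L+cc+1)/2 + lr \<le> (cc+1) + L*cc + L + lr + lr*L" using assms by linarith
    then show ?thesis by (simp only: e)
  qed
  then show ?thesis using assms by (simp add: field_simps)
qed

lemma small_lemma:
  fixes r A q e :: real and P K :: nat
  assumes r: "r > 1" and A: "A > 0" and qd: "q = 1/r^2" and e: "e > 0" and P: "P \<ge> 1"
    and K: "real K \<ge> (max 0 (ln (real P/e^2)) + \<bar>ln (A/(1-q))\<bar> + 1) / (2 * ln r)"
  shows "real P * ((A*q^(K+1)/(1-q))/e) < e"
proof -
  define L where "L = ln (real P/e^2)"
  define c where "c = ln (A/(1-q))"
  have lr: "ln r > 0" using r by simp
  have q: "0 < q" "q < 1" using r unfolding qd by (auto simp: field_simps)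
  have "2 * ln r * real K \<ge> max 0 L + \<bar>c\<bar> + 1" using K lr unfolding L_def c_def by (simp add: field_simps)
  then have k1: "2 * ln r * real K > L + c" by linarith
  have lnq: "ln q = - 2 * ln r" unfolding qd using r by (simp add: ln_div ln_realpow)
  have "ln (q^K) = real K * ln q" using q by (simp add: ln_realpow)
  also have "\<dots> < -(L + c)" using k1 lnq by (simp add: mult_ac)
  also have "-(L+c) = ln (e^2 * (1-q) / (real P * A))"
    unfolding L_def c_def using e P A q by (simp add: ln_div ln_mult)
  finally have "q^K < e^2 * (1-q) / (real P * A)"
    using q e P A by (subst (asm) ln_less_cancel_iff) (auto intro!: divide_pos_pos mult_pos_pos)
  then have h: "real P * A * q^K / (1-q) < e^2" using q e P A by (simp add: field_simps)
  have "q^(K+1) \<le> q^K" using q by (simp add: power_decreasing)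
  then have "real P * A * q^(K+1) / (1-q) \<le> real P * A * q^K / (1-q)"
    using q A by (intro divide_right_mono mult_left_mono) auto
  then have "real P * A * q^(K+1) / (1-q) < e^2" using h by linarith
  then show ?thesis using e q by (simp add: field_simps power2_eq_square)
qed


lemma summable_iff_ennreal:
  fixes x :: "nat \<Rightarrow> real"
  shows "summable (\<lambda>k. (x k)^2) \<longleftrightarrow> (\<Sum>k. ennreal ((x k)^2)) \<noteq> \<infinity>"
proof
  assume s: "summable (\<lambda>k. (x k)^2)"
  have "(\<Sum>k. ennreal ((x k)^2)) = ennreal (\<Sum>k. (x k)^2)"
    by (rule suminf_ennreal2[OF _ s]) simp
  then show "(\<Sum>k. ennreal ((x k)^2)) \<noteq> \<infinity>" unfolding infinity_ennreal_def by simp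
next
  assume "(\<Sum>k. ennreal ((x k)^2)) \<noteq> \<infinity>"
  then show "summable (\<lambda>k. (x k)^2)" unfolding infinity_ennreal_def
    by (intro summable_suminf_not_top) auto
qed

lemma core1:
  fixes Lam :: "nat \<Rightarrow> nat \<Rightarrow> 'a \<Rightarrow> real"
  assumes ps: "prob_space M"
    and meas: "\<And>p k. p \<in> {1..P} \<Longrightarrow> k \<ge> 1 \<Longrightarrow> Lam p k \<in> borel_measurable M"
    and mom: "\<And>p k. p \<in> {1..P} \<Longrightarrow> k \<ge> 1 \<Longrightarrow> (\<integral>\<^sup>+w. ennreal ((Lam p k w)^2) \<partial>M) \<le> ennreal (A * q^k)"
    and q: "0 < q" "q < 1" and A: "A \<ge> 0"
  shows "measure M {w \<in> space M. \<forall>p\<in>{1..P}. summable (\<lambda>k. (Lam p (Suc k) w)\<^sup>2)} = 1"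
proof -
  interpret prob_space M by fact
  define T where "T p w = (\<Sum>k. ennreal ((Lam p (k+0+1) w)^2))" for p w
  have Tm: "T p \<in> borel_measurable M" if "p \<in> {1..P}" for p
    unfolding T_def using meas[OF that] by measurable
  have Tfin: "AE w in M. T p w \<noteq> \<infinity>" if p: "p \<in> {1..P}" for p
  proof (rule nn_integral_PInf_AE[OF Tm[OF p]])
    have le: "integral\<^sup>N M (T p) \<le> ennreal (A * q^(0+1) / (1-q))" unfolding T_def
      by (rule tail_int[OF meas[OF p] mom[OF p] q A])
    show "integral\<^sup>N M (T p) \<noteq> \<infinity>" unfolding infinity_ennreal_def
      by (rule neq_top_trans[OF ennreal_neq_top le])
  qed
  define S where "S = {w \<in> space M. \<forall>p\<in>{1..P}. summable (\<lambda>k. (Lam p (Suc k) w)\<^sup>2)}"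
  have Tsuc: "T p w = (\<Sum>k. ennreal ((Lam p (Suc k) w)^2))" for p w unfolding T_def by simp
  have eqv: "summable (\<lambda>k. (Lam p (Suc k) w)\<^sup>2) \<longleftrightarrow> T p w \<noteq> \<infinity>" for p w
    unfolding Tsuc by (rule summable_iff_ennreal)
  have Seq: "S = {w \<in> space M. \<forall>p\<in>{1..P}. T p w \<noteq> \<infinity>}" unfolding S_def eqv ..
  have Sm: "S \<in> sets M"
  proof -
    have [measurable]: "T p \<in> borel_measurable M" if "p \<in> {1..P}" for p using Tm that .
    show ?thesis unfolding Seq by measurable
  qed
  have "AE w in M. \<forall>p\<in>{1..P}. T p w \<noteq> \<infinity>" by (rule AE_finite_allI) (use Tfin in auto)
  then have "AE w in M. w \<in> S" using AE_space by eventually_elim (auto simp: Seq)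
  then show ?thesis unfolding S_def[symmetric] using prob_eq_1[OF Sm] by simp
qed

theorem lemma2:
  fixes \<delta> \<rho> r :: real and al et :: "nat \<Rightarrow> real"
  assumes cases:
    "(\<delta> > 2 \<and> \<rho> > 0 \<and> (\<forall>k\<ge>1. al k = \<delta> ^ k \<and> et k = \<rho>) \<and> r = \<delta>) \<or>
     (\<delta> > 2 \<and> 0 < \<rho> \<and> \<rho> < 1 \<and> (\<forall>k\<ge>1. al k = \<delta> \<and> et k = \<rho> ^ k) \<and> r = 1 / \<rho>) \<or>
     (\<delta> > 2 \<and> 0 < \<rho> \<and> \<rho> < \<delta> \<and> (\<forall>k\<ge>1. al k = \<delta> ^ k \<and> et k = \<rho> ^ k) \<and> r = \<delta> / \<rho>)"
  shows
    "(\<forall>(M :: 'a measure) P Lam. P \<ge> 1 \<longrightarrow> gdp_loadings M P al et Lam \<longrightarrow>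
        measure M {w \<in> space M. \<forall>p\<in>{1..P}. summable (\<lambda>k. (Lam p (Suc k) w)\<^sup>2)} = 1)
     \<and>
     (\<exists>C :: real. \<forall>P :: nat. P \<ge> 1 \<longrightarrow> (\<forall>\<epsilon> :: real. \<epsilon> > 0 \<longrightarrow>
        (\<exists>K0 :: nat.
           (\<epsilon> < 1 \<longrightarrow> real K0 \<le> C * (1 + ln (real P / \<epsilon>\<^sup>2)) / ln r) \<and>
           (\<forall>(M :: 'a measure) Lam Sig. gdp_loadings M P al et Lam \<longrightarrow>
              (\<forall>i j. i \<noteq> j \<longrightarrow> Sig i j = 0) \<longrightarrow>
              (\<forall>K. K \<ge> K0 \<and> K \<ge> 1 \<longrightarrow>
                 measure M {w \<in> space M.
                   d_inf P (Omega_full Lam Sig w) (Omega_trunc Lam Sig K w) < \<epsilon>} > 1 - \<epsilon>)))))"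
  proof -
  obtain B where B: "B > 0" and r: "r > 1" and d: "\<delta> > 2"
    and hk: "\<And>k. k \<ge> 1 \<Longrightarrow> al k \<ge> \<delta> \<and> et k > 0 \<and> (et k / al k)^2 = B * (1/r^2)^k"
    using cases_facts[OF cases] by blast
  define q where "q = 1/r^2"
  define A where "A = 4*\<delta>/(\<delta>-2) * B"
  have q: "0 < q" "q < 1" using r unfolding q_def by (auto simp: field_simps)
  have A: "A > 0" using B d unfolding A_def by auto
  have gl: "prob_space M \<and> Lam p k \<in> borel_measurable M \<and> (\<integral>\<^sup>+w. ennreal ((Lam p k w)^2) \<partial>M) \<le> ennreal (A * q^k)"
    if G: "gdp_loadings M P al et Lam" and p: "p \<in> {1..P}" and k: "k \<ge> 1"
    for M :: "'a measure" and P Lam p k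
  proof -
    have ps: "prob_space M" using G by (simp add: gdp_loadings_def)
    have D: "distributed M lborel (Lam p k) (\<lambda>x. ennreal (gdp_density (al k) (et k) x))"
      using G p k by (simp add: gdp_loadings_def)
    have m: "Lam p k \<in> borel_measurable M" using distributed_measurable[OF D] by simp
    have hk': "al k \<ge> \<delta>" "et k > 0" "(et k / al k)^2 = B * q^k" using hk[OF k] by (auto simp: q_def)
    have a2: "al k > 2" using hk' d by linarith
    have "(\<integral>\<^sup>+w. ennreal ((Lam p k w)^2) \<partial>M) = (\<integral>\<^sup>+x. ennreal (gdp_density (al k) (et k) x) * ennreal (x^2) \<partial>lborel)"
      by (rule distributed_nn_integral[OF D, of "\<lambda>x. ennreal (x^2)", symmetric]) simp
    also have "\<dots> \<le> ennreal (2*(et k)^2/((al k-1)*(al k-2)))" by (rule moment[OF a2 hk'(2)])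
    also have "\<dots> \<le> ennreal (A * q^k)"
    proof (rule ennreal_leI)
      have "2*(et k)^2/((al k-1)*(al k-2)) \<le> 4*\<delta>/(\<delta>-2) * (et k/al k)^2"
        by (rule vbound[OF d hk'(1) hk'(2)])
      then show "2*(et k)^2/((al k-1)*(al k-2)) \<le> A * q^k" unfolding hk'(3) A_def by (simp add: mult_ac)
    qed
    finally show ?thesis using ps m by simp
  qed
  show ?thesis
  proof (intro conjI allI impI)
    fix M :: "'a measure" and P Lam
    assume "P \<ge> 1" and G: "gdp_loadings M P al et Lam"
    show "measure M {w \<in> space M. \<forall>p\<in>{1..P}. summable (\<lambda>k. (Lam p (Suc k) w)\<^sup>2)} = 1"
      by (rule core1[of M P Lam A q]) (use gl[OF G] q A G in \<open>auto simp: gdp_loadings_def\<close>)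
  next
    define c where "c = ln (A/(1-q))"
    show "\<exists>C :: real. \<forall>P :: nat. P \<ge> 1 \<longrightarrow> (\<forall>\<epsilon> :: real. \<epsilon> > 0 \<longrightarrow>
        (\<exists>K0 :: nat.
           (\<epsilon> < 1 \<longrightarrow> real K0 \<le> C * (1 + ln (real P / \<epsilon>\<^sup>2)) / ln r) \<and>
           (\<forall>(M :: 'a measure) Lam Sig. gdp_loadings M P al et Lam \<longrightarrow>
              (\<forall>i j. i \<noteq> j \<longrightarrow> Sig i j = 0) \<longrightarrow>
              (\<forall>K. K \<ge> K0 \<and> K \<ge> 1 \<longrightarrow>
                 measure M {w \<in> space M.
                   d_inf P (Omega_full Lam Sig w) (Omega_trunc Lam Sig K w) < \<epsilon>} > 1 - \<epsilon>))))"
    proof (intro exI[of _ "\<bar>c\<bar> + 1 + ln r"] allI impI)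
      fix P :: nat and \<epsilon> :: real
      assume P: "P \<ge> 1" and e: "\<epsilon> > 0"
      define L where "L = ln (real P / \<epsilon>\<^sup>2)"
      define X where "X = (max 0 L + \<bar>c\<bar> + 1) / (2 * ln r)"
      have lr: "ln r > 0" using r by simp
      have X0: "X \<ge> 0" using lr unfolding X_def by (auto intro!: divide_nonneg_pos)
      define K0 where "K0 = nat \<lceil>X\<rceil>"
      have K0X: "real K0 \<ge> X" unfolding K0_def by (rule real_nat_ceiling_ge)
      have K0X': "real K0 \<le> X + 1" unfolding K0_def using X0 by linarith
      show "\<exists>K0 :: nat.
           (\<epsilon> < 1 \<longrightarrow> real K0 \<le> (\<bar>c\<bar> + 1 + ln r) * (1 + ln (real P / \<epsilon>\<^sup>2)) / ln r) \<and>
           (\<forall>(M :: 'a measure) Lam Sig. gdp_loadings M P al et Lam \<longrightarrow>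
              (\<forall>i j. i \<noteq> j \<longrightarrow> Sig i j = 0) \<longrightarrow>
              (\<forall>K. K \<ge> K0 \<and> K \<ge> 1 \<longrightarrow>
                 measure M {w \<in> space M.
                   d_inf P (Omega_full Lam Sig w) (Omega_trunc Lam Sig K w) < \<epsilon>} > 1 - \<epsilon>))"
      proof (intro exI[of _ K0] conjI impI allI)
        assume e1: "\<epsilon> < 1"
        have "\<epsilon>\<^sup>2 < 1" using e e1 by (simp add: power_less_one_iff)
        then have "1 \<le> real P / \<epsilon>\<^sup>2" using P e by (simp add: field_simps)
        then have L0: "L \<ge> 0" unfolding L_def by simp
        have "real K0 \<le> (L + \<bar>c\<bar> + 1) / (2 * ln r) + 1" using K0X' L0 unfolding X_def by simp
        also have "\<dots> \<le> (\<bar>c\<bar> + 1 + ln r) * (1 + L) / ln r" by (rule K0_bound[OF lr L0]) simp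
        finally show "real K0 \<le> (\<bar>c\<bar> + 1 + ln r) * (1 + ln (real P / \<epsilon>\<^sup>2)) / ln r" unfolding L_def .
      next
        fix M :: "'a measure" and Lam :: "nat \<Rightarrow> nat \<Rightarrow> 'a \<Rightarrow> real" and Sig :: "nat \<Rightarrow> nat \<Rightarrow> real" and K :: nat
        assume G: "gdp_loadings M P al et Lam" and "\<forall>i j. i \<noteq> j \<longrightarrow> Sig i j = 0" and K: "K0 \<le> K \<and> 1 \<le> K"
        have KX: "real K \<ge> (max 0 (ln (real P/\<epsilon>^2)) + \<bar>ln (A/(1-q))\<bar> + 1) / (2 * ln r)"
          using K K0X unfolding X_def L_def c_def by linarith
        have small: "real P * ((A*q^(K+1)/(1-q))/\<epsilon>) < \<epsilon>"
          by (rule small_lemma[OF r A q_def e P KX])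
        show "measure M {w \<in> space M. d_inf P (Omega_full Lam Sig w) (Omega_trunc Lam Sig K w) < \<epsilon>} > 1 - \<epsilon>"
          by (rule core2[OF _ P _ _ q _ e small]) (use gl[OF G] A G in \<open>auto simp: gdp_loadings_def\<close>)
      qed
    qed
  qed
qed

end
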